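(* Let $U\subset\mathbb{C}$ be open, let $\mu,a:U\to\mathbb{C}$ be holomorphic with $\mu\neq0$ and $|a|\neq1$ on $U$, and let $F(\theta;w)$ be the $\theta$-family of minimal surfaces defined by $a,\mu$. For $\theta\in\mathbb{R}$ and $w\in U$ set $$L_3(a)=\big(1+a\bar a,\;a+\bar a,\;-i(a-\bar a),\;-1+a\bar a\big),\qquad L_0(e^{i\theta}a)=\big(1+a\bar a,\;ae^{i\theta}+\bar ae^{-i\theta},\;-i(ae^{i\theta}-\bar ae^{-i\theta}),\;1-a\bar a\big),$$ (with $a=a(w)$), and $$\tau(\theta;a)=\frac{L_3(a)+L_0(e^{i\theta}a)}{\sqrt{-2\langle L_3(a),L_0(e^{i\theta}a)\rangle}},\qquad \nu(\theta;a)=\frac{L_3(a)-L_0(e^{i\theta}a)}{\sqrt{-2\langle L_3(a),L_0(e^{i\theta}a)\rangle}}.$$ Then $\tau(\theta;a(w))$ and $\nu(\theta;a(w))$ are the corresponding normal vectors of the surface $F(\theta;\cdot)$ at $w$ (an orthonormal basis of the normal plane, $\tau$ unit timelike, $\nu$ unit spacelike); the metric tensor of the surfaces of the family is $$\mathbf g(\theta;w)=4\mu(w)\overline{\mu(w)}\big(1-2a(w)\overline{a(w)}\cos\theta+(a(w)\overline{a(w)})^2\big)\,dw\,d\bar w;$$ and $\tau^3(\theta;w)\equiv0$ and $\nu^0(\theta;w)\equiv0$ for all $(\theta,w)\in\mathbb{R}\times U$.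
   Context: $\mathbb{R}^4_1$ has the Lorentz product $\langle x,y\rangle=-x^0y^0+x^1y^1+x^2y^2+x^3y^3$, extended complex-bilinearly to $\mathbb{C}^4$. For $a,b\in\mathbb{C}$ let $W(a,b)=(a+b,\;1+ab,\;i(1-ab),\;a-b)$. The $\theta$-family defined by holomorphic $\mu,a$ is $F(\theta;w)=P+2\operatorname{Re}\int_{w_0}^{w}\mu(\xi)W(a(\xi),e^{i\theta}a(\xi))\,d\xi$ for a fixed $P\in\mathbb{R}^4_1$ and $w_0\in U$ (assume $U$ simply connected so this is well defined); each $F(\theta;\cdot)$ is a minimal isothermal spacelike surface with $\partial_wF=\mu W(a,e^{i\theta}a)$. *)

theory Defs
  imports "HOL-Analysis.Analysis"
begin

text \<open>Vectors of R^4_1 and C^4 are modelled as real^4 / complex^4 with components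
  indexed 0,1,2,3 (the elements of the numeral type 4).\<close>

definition mk4 :: "'a \<Rightarrow> 'a \<Rightarrow> 'a \<Rightarrow> 'a \<Rightarrow> 'a^4" where
  "mk4 x0 x1 x2 x3 = (\<chi> k. if k = 0 then x0 else if k = 1 then x1 else if k = 2 then x2 else x3)"

definition lor :: "real^4 \<Rightarrow> real^4 \<Rightarrow> real" where
  "lor x y = - x$0 * y$0 + x$1 * y$1 + x$2 * y$2 + x$3 * y$3"

definition lorC :: "complex^4 \<Rightarrow> complex^4 \<Rightarrow> complex" where
  "lorC x y = - x$0 * y$0 + x$1 * y$1 + x$2 * y$2 + x$3 * y$3"

definition W :: "complex \<Rightarrow> complex \<Rightarrow> complex^4" where
  "W a b = mk4 (a + b) (1 + a*b) (\<i> * (1 - a*b)) (a - b)"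

text \<open>L_3(a) and L_0(e^{i theta} a), written literally in C^4; all entries are real,
  so the real vectors are obtained by taking real parts componentwise.\<close>
definition L3C :: "complex \<Rightarrow> complex^4" where
  "L3C a = mk4 (1 + a * cnj a) (a + cnj a) (- \<i> * (a - cnj a)) (-1 + a * cnj a)"

definition L0C :: "real \<Rightarrow> complex \<Rightarrow> complex^4" where
  "L0C \<theta> a = mk4 (1 + a * cnj a) (a * exp (\<i> * \<theta>) + cnj a * exp (- \<i> * \<theta>))
      (- \<i> * (a * exp (\<i> * \<theta>) - cnj a * exp (- \<i> * \<theta>))) (1 - a * cnj a)"

definition L3 :: "complex \<Rightarrow> real^4" where
  "L3 a = (\<chi> k. Re (L3C a $ k))"

definition L0 :: "real \<Rightarrow> complex \<Rightarrow> real^4" where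
  "L0 \<theta> a = (\<chi> k. Re (L0C \<theta> a $ k))"

definition tau :: "real \<Rightarrow> complex \<Rightarrow> real^4" where
  "tau \<theta> a = (1 / sqrt (- 2 * lor (L3 a) (L0 \<theta> a))) *\<^sub>R (L3 a + L0 \<theta> a)"

definition nu :: "real \<Rightarrow> complex \<Rightarrow> real^4" where
  "nu \<theta> a = (1 / sqrt (- 2 * lor (L3 a) (L0 \<theta> a))) *\<^sub>R (L3 a - L0 \<theta> a)"

text \<open>The theta-family F(theta; w) = P + 2 Re G(theta; w), where G(theta; .) is the holomorphic
  primitive int_{w0}^w mu(xi) W(a(xi), e^{i theta} a(xi)) d xi (vanishing at w0).\<close>
definition theta_primitive ::
  "complex set \<Rightarrow> complex \<Rightarrow> (complex \<Rightarrow> complex) \<Rightarrow> (complex \<Rightarrow> complex)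
     \<Rightarrow> (real \<Rightarrow> complex \<Rightarrow> complex^4) \<Rightarrow> bool" where
  "theta_primitive U w0 \<mu> a G \<longleftrightarrow>
     (\<forall>\<theta>. G \<theta> w0 = 0 \<and>
       (\<forall>w\<in>U. \<forall>k. ((\<lambda>z. G \<theta> z $ k) has_field_derivative
                       (\<mu> w * W (a w) (exp (\<i> * \<theta>) * a w) $ k)) (at w)))"

definition theta_family ::
  "real^4 \<Rightarrow> (real \<Rightarrow> complex \<Rightarrow> complex^4) \<Rightarrow> real \<Rightarrow> complex \<Rightarrow> real^4" where
  "theta_family P G \<theta> w = P + (\<chi> k. 2 * Re (G \<theta> w $ k))"

end

theory Submission
  imports Defs
begin

lemma deriv4:
  fixes f :: "4 \<Rightarrow> complex \<Rightarrow> complex" and P :: "real^4"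
  assumes "\<And>k. (f k has_field_derivative c k) (at w)"
  shows "((\<lambda>z. P + (\<chi> k. 2 * Re (f k z))) has_derivative (\<lambda>h. \<chi> k. 2 * Re (c k * h))) (at w)"
proof -
  have "((\<lambda>z. (\<chi> k. 2 * Re (f k z))) has_derivative (\<lambda>h. \<chi> k. 2 * Re (c k * h))) (at w within UNIV)"
  proof (subst has_derivative_componentwise_within, intro ballI)
    fix i :: "real^4" assume "i \<in> Basis"
    then obtain j where j: "i = axis j 1" by (auto simp: Basis_vec_def)
    have "((\<lambda>z. Re (f j z)) has_derivative (\<lambda>h. Re (c j * h))) (at w)"
      using bounded_linear.has_derivative[OF bounded_linear_Re has_field_derivative_imp_has_derivative[OF assms[of j]]]
      by (simp add: mult.commute)
    then have "((\<lambda>z. 2 * Re (f j z)) has_derivative (\<lambda>h. 2 * Re (c j * h))) (at w)"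
      by (rule has_derivative_mult_right)
    then show "((\<lambda>x. (\<chi> k. 2 * Re (f k x)) \<bullet> i) has_derivative (\<lambda>x. (\<chi> k. 2 * Re (c k * x)) \<bullet> i)) (at w within UNIV)"
      by (simp add: j inner_axis)
  qed
  from has_derivative_add[OF has_derivative_const[of P] this[simplified]] show ?thesis by simp
qed

lemma mk4_nth[simp]: "mk4 x0 x1 x2 x3 $ 0 = x0" "mk4 x0 x1 x2 x3 $ 1 = x1" "mk4 x0 x1 x2 x3 $ 2 = x2" "mk4 x0 x1 x2 x3 $ 3 = x3"
  by (simp_all add: mk4_def)

lemma expi: "exp (\<i> * complex_of_real t) = Complex (cos t) (sin t)"
  by (simp add: exp_eq_polar cis.ctr)
lemma t1:
  fixes m a :: complex and h :: complex and t :: real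
  shows "lor (\<chi> k. 2 * Re (m * W a (exp (\<i> * t) * a) $ k * h)) (L3 a) = 0"
  unfolding lor_def L3_def L3C_def W_def
  apply (simp add: expi)
  apply (cases a; cases m; cases h)
  apply (simp add: algebra_simps)
  done

lemma L0C_alt: "L0C t a = mk4 (1 + a * cnj a) (exp (\<i> * t) * a + cnj (exp (\<i> * t) * a))
   (- \<i> * (exp (\<i> * t) * a - cnj (exp (\<i> * t) * a))) (1 - a * cnj a)"
  unfolding L0C_def by (simp add: exp_cnj mult.commute)

lemma bnorm: "(exp (\<i> * complex_of_real t) * a) * cnj (exp (\<i> * complex_of_real t) * a) = a * cnj a"
  by (simp add: exp_cnj) (metis (no_types, lifting) exp_minus_inverse mult.left_commute mult.right_neutral mult_minus_left)

lemma t2g: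
  fixes m a b h :: complex
  assumes "b * cnj b = a * cnj a"
  shows "lor (\<chi> k. 2 * Re (m * W a b $ k * h)) (\<chi> k. Re (mk4 (1 + a * cnj a) (b + cnj b)
   (- \<i> * (b - cnj b)) (1 - a * cnj a) $ k)) = 0"
proof -
  obtain x y where a: "a = Complex x y" by (cases a)
  obtain u v where b: "b = Complex u v" by (cases b)
  obtain p q where m: "m = Complex p q" by (cases m)
  obtain h1 h2 where h: "h = Complex h1 h2" by (cases h)
  have e: "u * u + v * v = x * x + y * y" using assms by (simp add: a b complex_eq_iff)
  show ?thesis unfolding lor_def W_def a b m h
    apply simp using e by algebra
qed
lemma recos: "Re (a * cnj (exp (\<i> * complex_of_real t) * a)) = Re (a * cnj a) * cos t"
  by (cases a) (simp add: expi algebra_simps)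

lemma metric_g:
  fixes m a b :: complex and c :: real
  assumes "b * cnj b = a * cnj a" and "Re (a * cnj b) = Re (a * cnj a) * c"
  defines "D \<equiv> (\<lambda>h. \<chi> k. 2 * Re (m * W a b $ k * h))"
  shows "complex_of_real (lor (D 1) (D 1)) = 4 * m * cnj m * (1 - 2 * a * cnj a * c + (a * cnj a)^2)"
    and "complex_of_real (lor (D \<i>) (D \<i>)) = 4 * m * cnj m * (1 - 2 * a * cnj a * c + (a * cnj a)^2)"
    and "lor (D 1) (D \<i>) = 0"
proof -
  obtain x y where a: "a = Complex x y" by (cases a)
  obtain u v where b: "b = Complex u v" by (cases b)
  obtain p q where m: "m = Complex p q" by (cases m)
  have e: "u * u + v * v = x * x + y * y" using assms(1) by (simp add: a b complex_eq_iff)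
  have f: "x * u + y * v = (x * x + y * y) * c" using assms(2) by (simp add: a b)
  show "complex_of_real (lor (D 1) (D 1)) = 4 * m * cnj m * (1 - 2 * a * cnj a * c + (a * cnj a)^2)"
    unfolding lor_def W_def a b m D_def
    apply (simp add: complex_eq_iff power2_eq_square) using e f by algebra
  show "complex_of_real (lor (D \<i>) (D \<i>)) = 4 * m * cnj m * (1 - 2 * a * cnj a * c + (a * cnj a)^2)"
    unfolding lor_def W_def a b m D_def
    apply (simp add: complex_eq_iff power2_eq_square) using e f by algebra
  show "lor (D 1) (D \<i>) = 0"
    unfolding lor_def W_def a b m D_def
    apply (simp add: complex_eq_iff power2_eq_square) by (simp add: algebra_simps)
qed

lemma lor_add_right: "lor x (y + z) = lor x y + lor x z"
  by (simp add: lor_def algebra_simps)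
lemma lor_diff_right: "lor x (y - z) = lor x y - lor x z"
  by (simp add: lor_def algebra_simps)
lemma lor_scaleR_right: "lor x (k *\<^sub>R y) = k * lor x y"
  by (simp add: lor_def algebra_simps)
lemma lor_add_left: "lor (y + z) x = lor y x + lor z x"
  by (simp add: lor_def algebra_simps)
lemma lor_diff_left: "lor (y - z) x = lor y x - lor z x"
  by (simp add: lor_def algebra_simps)
lemma lor_scaleR_left: "lor (k *\<^sub>R y) x = k * lor y x"
  by (simp add: lor_def algebra_simps)
lemma lor_commute: "lor x y = lor y x"
  by (simp add: lor_def algebra_simps)

lemmas lor_lin = lor_add_right lor_diff_right lor_scaleR_right lor_add_left lor_diff_left lor_scaleR_left

lemma L3_null: "lor (L3 a) (L3 a) = 0"
  by (cases a) (simp add: lor_def L3_def L3C_def algebra_simps)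

lemma L0_eq: "L0 t a = (\<chi> k. Re (mk4 (1 + a * cnj a) (exp (\<i> * t) * a + cnj (exp (\<i> * t) * a))
   (- \<i> * (exp (\<i> * t) * a - cnj (exp (\<i> * t) * a))) (1 - a * cnj a) $ k))"
  unfolding L0_def L0C_alt ..

lemma L0_null: "lor (L0 t a) (L0 t a) = 0"
proof -
  define b where "b = exp (\<i> * complex_of_real t) * a"
  have bb: "b * cnj b = a * cnj a" unfolding b_def by (rule bnorm)
  obtain x y where a: "a = Complex x y" by (cases a)
  obtain u v where b: "b = Complex u v" by (cases b)
  have e: "u * u + v * v = x * x + y * y" using bb by (simp add: a b complex_eq_iff)
  show ?thesis unfolding L0_eq b_def[symmetric] unfolding lor_def a b
    apply simp using e by algebra
qed

lemma L30: "lor (L3 a) (L0 t a) = -2 * (1 + (Re (a * cnj a))^2) + 4 * Re (a * cnj a) * cos t"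
proof -
  define b where "b = exp (\<i> * complex_of_real t) * a"
  have bb: "b * cnj b = a * cnj a" unfolding b_def by (rule bnorm)
  have rc: "Re (a * cnj b) = Re (a * cnj a) * cos t" unfolding b_def by (rule recos)
  obtain x y where a: "a = Complex x y" by (cases a)
  obtain u v where b: "b = Complex u v" by (cases b)
  have e: "u * u + v * v = x * x + y * y" using bb by (simp add: a b complex_eq_iff)
  have f: "x * u + y * v = (x * x + y * y) * cos t" using rc by (simp add: a b)
  show ?thesis unfolding L0_eq b_def[symmetric] unfolding lor_def L3_def L3C_def a b
    apply (simp add: power2_eq_square) using e f by algebra
qed

lemma Npos:
  assumes "cmod a \<noteq> 1"
  shows "- 2 * lor (L3 a) (L0 t a) > 0"
proof -
  define r where "r = Re (a * cnj a)"
  have r: "r = (cmod a)^2" unfolding r_def by (simp add: complex_mult_cnj cmod_power2)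
  have r0a: "r \<ge> 0" by (simp add: r)
  have r0b: "r \<noteq> 1"
  proof
    assume "r = 1"
    then have "(cmod a)^2 = 1^2" by (simp add: r)
    then have "cmod a = 1" by (subst (asm) power2_eq_iff_nonneg) auto
    with assms show False by simp
  qed
  note r0 = r0a r0b
  have "cos t \<le> 1" by simp
  then have "r * cos t \<le> r" using r0 by (simp add: mult_left_le)
  moreover have "(1 - r)^2 > 0" using r0 by simp
  ultimately have "1 + r^2 - 2 * r * cos t > 0" by (simp add: power2_eq_square algebra_simps)
  then show ?thesis unfolding L30 r_def[symmetric] by simp
qed

theorem mainTheorem7:
  fixes U :: "complex set" and \<mu> a :: "complex \<Rightarrow> complex" and w0 :: complex
    and P :: "real^4" and G :: "real \<Rightarrow> complex \<Rightarrow> complex^4"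
    and F :: "real \<Rightarrow> complex \<Rightarrow> real^4"
  assumes "open U"
    and "\<mu> holomorphic_on U" and "a holomorphic_on U"
    and "\<forall>w\<in>U. \<mu> w \<noteq> 0" and "\<forall>w\<in>U. cmod (a w) \<noteq> 1"
    and "w0 \<in> U"
    and "theta_primitive U w0 \<mu> a G"
    and "F = theta_family P G"
  shows "\<forall>\<theta>::real. \<forall>w\<in>U.
     (\<exists>D. (F \<theta> has_derivative D) (at w) \<and>
        lor (D 1) (tau \<theta> (a w)) = 0 \<and> lor (D \<i>) (tau \<theta> (a w)) = 0 \<and>
        lor (D 1) (nu \<theta> (a w)) = 0 \<and> lor (D \<i>) (nu \<theta> (a w)) = 0 \<and>
        lor (tau \<theta> (a w)) (tau \<theta> (a w)) = -1 \<and>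
        lor (nu \<theta> (a w)) (nu \<theta> (a w)) = 1 \<and>
        lor (tau \<theta> (a w)) (nu \<theta> (a w)) = 0 \<and>
        complex_of_real (lor (D 1) (D 1)) =
          4 * \<mu> w * cnj (\<mu> w) * (1 - 2 * a w * cnj (a w) * cos \<theta> + (a w * cnj (a w))^2) \<and>
        complex_of_real (lor (D \<i>) (D \<i>)) =
          4 * \<mu> w * cnj (\<mu> w) * (1 - 2 * a w * cnj (a w) * cos \<theta> + (a w * cnj (a w))^2) \<and>
        lor (D 1) (D \<i>) = 0) \<and>
     tau \<theta> (a w) $ 3 = 0 \<and> nu \<theta> (a w) $ 0 = 0"
proof (intro allI ballI)
  fix \<theta> :: real and w assume w: "w \<in> U"
  let ?b = "exp (\<i> * complex_of_real \<theta>) * a w"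
  define c where "c = (\<lambda>k. \<mu> w * W (a w) ?b $ k)"
  define D where "D = (\<lambda>h. \<chi> k. 2 * Re (c k * h))"
  have der: "\<And>k. ((\<lambda>z. G \<theta> z $ k) has_field_derivative c k) (at w)"
    using assms(7) w unfolding theta_primitive_def c_def by blast
  have FD: "(F \<theta> has_derivative D) (at w)"
    unfolding assms(8) D_def theta_family_def using deriv4[OF der] by simp
  have Dmul: "\<And>h. D h = (\<chi> k. 2 * Re (\<mu> w * W (a w) ?b $ k * h))"
    unfolding D_def c_def ..
  define N where "N = - 2 * lor (L3 (a w)) (L0 \<theta> (a w))"
  have N: "N > 0" unfolding N_def using Npos assms(5) w by blast
  have tau: "tau \<theta> (a w) = (1 / sqrt N) *\<^sub>R (L3 (a w) + L0 \<theta> (a w))"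
    unfolding tau_def N_def ..
  have nu: "nu \<theta> (a w) = (1 / sqrt N) *\<^sub>R (L3 (a w) - L0 \<theta> (a w))"
    unfolding nu_def N_def ..
  have o3: "\<And>h. lor (D h) (L3 (a w)) = 0" unfolding Dmul by (rule t1)
  have o0: "\<And>h. lor (D h) (L0 \<theta> (a w)) = 0"
    unfolding Dmul L0_eq by (rule t2g) (rule bnorm)
  have sq: "sqrt N * sqrt N = N" using N by simp
  have lc: "lor (L0 \<theta> (a w)) (L3 (a w)) = lor (L3 (a w)) (L0 \<theta> (a w))" by (rule lor_commute)
  have tt: "lor (tau \<theta> (a w)) (tau \<theta> (a w)) = -1"
    unfolding tau using N
    apply (simp add: lor_lin L3_null L0_null lc)
    apply (simp add: N_def field_simps) done
  have nn: "lor (nu \<theta> (a w)) (nu \<theta> (a w)) = 1"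
    unfolding nu using N
    apply (simp add: lor_lin L3_null L0_null lc)
    apply (simp add: N_def field_simps) done
  have tn: "lor (tau \<theta> (a w)) (nu \<theta> (a w)) = 0"
    unfolding tau nu by (simp add: lor_lin L3_null L0_null lc)
  have mg: "complex_of_real (lor (D 1) (D 1)) = 4 * \<mu> w * cnj (\<mu> w) * (1 - 2 * a w * cnj (a w) * cos \<theta> + (a w * cnj (a w))^2)"
    "complex_of_real (lor (D \<i>) (D \<i>)) = 4 * \<mu> w * cnj (\<mu> w) * (1 - 2 * a w * cnj (a w) * cos \<theta> + (a w * cnj (a w))^2)"
    "lor (D 1) (D \<i>) = 0"
    unfolding Dmul by (rule metric_g, rule bnorm, rule recos)+
  have t3: "tau \<theta> (a w) $ 3 = 0"
    unfolding tau by (simp add: L3_def L3C_def L0_def L0C_def)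
  have n0: "nu \<theta> (a w) $ 0 = 0"
    unfolding nu by (simp add: L3_def L3C_def L0_def L0C_def)
  show "(\<exists>D. (F \<theta> has_derivative D) (at w) \<and>
        lor (D 1) (tau \<theta> (a w)) = 0 \<and> lor (D \<i>) (tau \<theta> (a w)) = 0 \<and>
        lor (D 1) (nu \<theta> (a w)) = 0 \<and> lor (D \<i>) (nu \<theta> (a w)) = 0 \<and>
        lor (tau \<theta> (a w)) (tau \<theta> (a w)) = -1 \<and>
        lor (nu \<theta> (a w)) (nu \<theta> (a w)) = 1 \<and>
        lor (tau \<theta> (a w)) (nu \<theta> (a w)) = 0 \<and>
        complex_of_real (lor (D 1) (D 1)) =
          4 * \<mu> w * cnj (\<mu> w) * (1 - 2 * a w * cnj (a w) * cos \<theta> + (a w * cnj (a w))^2) \<and>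
        complex_of_real (lor (D \<i>) (D \<i>)) =
          4 * \<mu> w * cnj (\<mu> w) * (1 - 2 * a w * cnj (a w) * cos \<theta> + (a w * cnj (a w))^2) \<and>
        lor (D 1) (D \<i>) = 0) \<and>
     tau \<theta> (a w) $ 3 = 0 \<and> nu \<theta> (a w) $ 0 = 0"
    apply (intro conjI exI[of _ D])
    using FD tt nn tn mg t3 n0 apply simp_all
    unfolding tau nu by (simp_all add: lor_lin o3 o0)
qed

end
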